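(* Let $$y=\frac{9s(2s^3-3s+4)}{4(s+1)(s-1)^2(2s^2+6s+1)},\qquad t=\frac{27s^2}{4(s^2-1)^3}.$$ Then $y(t)$ is a solution of $\mathrm{P}_{\mathrm{VI}}$ with parameters $(\theta_1,\theta_2,\theta_3,\theta_4)=(1/2,1/2,1/4,2/3)$.
   Context: $\mathrm{P}_{\mathrm{VI}}$ is the equation $$\frac{d^2y}{dt^2}=\frac12\Big(\frac1y+\frac1{y-1}+\frac1{y-t}\Big)\Big(\frac{dy}{dt}\Big)^2-\Big(\frac1t+\frac1{t-1}+\frac1{y-t}\Big)\frac{dy}{dt}+\frac{y(y-1)(y-t)}{t^2(t-1)^2}\Big(\alpha+\beta\frac{t}{y^2}+\gamma\frac{t-1}{(y-1)^2}+\delta\frac{t(t-1)}{(y-t)^2}\Big),$$ with $\alpha=(\theta_4-1)^2/2$, $\beta=-\theta_1^2/2$, $\gamma=\theta_3^2/2$, $\delta=(1-\theta_2^2)/2$. When $y,t$ are given as rational functions of a parameter on a curve, derivatives with respect to $t$ are computed via the chain rule. *)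

theory Defs
  imports "HOL-Analysis.Analysis"
begin

definition PVI_residual ::
  "complex \<Rightarrow> complex \<Rightarrow> complex \<Rightarrow> complex \<Rightarrow> complex \<Rightarrow> complex \<Rightarrow> complex \<Rightarrow> complex \<Rightarrow> complex" where
  "PVI_residual th1 th2 th3 th4 t y y1 y2 =
     (let \<alpha> = (th4 - 1)^2 / 2; \<beta> = - (th1^2) / 2; \<gamma> = th3^2 / 2; \<delta> = (1 - th2^2) / 2 in
      y2 - ( (1/2) * (1/y + 1/(y - 1) + 1/(y - t)) * y1^2
             - (1/t + 1/(t - 1) + 1/(y - t)) * y1
             + y * (y - 1) * (y - t) / (t^2 * (t - 1)^2)
               * (\<alpha> + \<beta> * t / y^2 + \<gamma> * (t - 1) / (y - 1)^2 + \<delta> * t * (t - 1) / (y - t)^2)))"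

definition PVI_sol_y :: "complex \<Rightarrow> complex" where
  "PVI_sol_y s = 9 * s * (2 * s^3 - 3 * s + 4) / (4 * (s + 1) * (s - 1)^2 * (2 * s^2 + 6 * s + 1))"

definition PVI_sol_t :: "complex \<Rightarrow> complex" where
  "PVI_sol_t s = 27 * s^2 / (4 * (s^2 - 1)^3)"

end

theory Submission
  imports Defs
begin

definition YD :: "complex \<Rightarrow> complex" where
  "YD u = (- 36 + 18 * u - 27 * u^2 - 603 * u^3 - 252 * u^4 - 36 * u^6 - 36 * u^7)
     / (4 * (u+1)^2 * (u-1)^3 * (2*u^2+6*u+1)^2)"

definition TD :: "complex \<Rightarrow> complex" where
  "TD u = (- 27 * u - 54 * u^3) / (2 * (u+1)^4 * (u-1)^4)"

definition A0 :: "complex \<Rightarrow> complex" where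
  "A0 u = 4 - 2 * u + 3 * u^2 + 67 * u^3 + 28 * u^4 + 4 * u^6 + 4 * u^7"

definition AB :: "complex \<Rightarrow> complex" where
  "AB u = (u+1)^2 * (u-1) * A0 u / (6 * u * (2*u^2+1) * (2*u^2+6*u+1)^2)"

definition C0 :: "complex \<Rightarrow> complex" where
  "C0 u = - 4 - 68 * u - 23 * u^2 - 87 * u^3 + 185 * u^4 - u^5 - 2530 * u^6
      - 1612 * u^7 - 724 * u^8 - 336 * u^9 - 104 * u^10 - 224 * u^11 - 256 * u^12 - 48 * u^13"

definition G2 :: "complex \<Rightarrow> complex" where
  "G2 u = (u+1)^5 * (u-1)^4 * C0 u / (81 * u^3 * (2*u^2+1)^3 * (2*u^2+6*u+1)^3)"

lemma quot_deriv:
  fixes f g :: "complex \<Rightarrow> complex"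
  assumes "(f has_field_derivative f') (at x)" "(g has_field_derivative g') (at x)"
    "g x \<noteq> 0" "h \<noteq> 0" "(f' * g x - f x * g') * h = k * (g x * g x)"
  shows "((\<lambda>x. f x / g x) has_field_derivative k / h) (at x)"
proof -
  have "k / h = (f' * g x - f x * g') / (g x * g x)"
    using assms(3,4,5) by (simp add: frac_eq_eq)
  then show ?thesis using DERIV_divide[OF assms(1,2,3)] by simp
qed

lemma dY:
  assumes "u + 1 \<noteq> 0" "u - 1 \<noteq> 0" "2 * u^2 + 6 * u + 1 \<noteq> 0"
  shows "(PVI_sol_y has_field_derivative YD u) (at u)"
proof -
  have f: "((\<lambda>u. 9 * u * (2 * u^3 - 3 * u + 4)) has_field_derivative (72*u^3 - 54*u + 36)) (at u)"
    by (auto intro!: derivative_eq_intros; algebra)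
  have g: "((\<lambda>u. 4 * (u + 1) * (u - 1)^2 * (2 * u^2 + 6 * u + 1)) has_field_derivative
     (20 - 40 * u - 84 * u^2 + 64 * u^3 + 40 * u^4)) (at u)"
    by (auto intro!: derivative_eq_intros; algebra)
  have "((\<lambda>u. 9 * u * (2 * u^3 - 3 * u + 4) / (4 * (u + 1) * (u - 1)^2 * (2 * u^2 + 6 * u + 1)))
     has_field_derivative YD u) (at u)"
    unfolding YD_def
  proof (rule quot_deriv[OF f g])
    show "4 * (u + 1) * (u - 1)^2 * (2 * u^2 + 6 * u + 1) \<noteq> 0" using assms by (metis mult_eq_0_iff power_eq_0_iff zero_neq_numeral)
    show "4 * (u + 1)^2 * (u - 1) ^ 3 * (2 * u^2 + 6 * u + 1)^2 \<noteq> 0" using assms by (metis mult_eq_0_iff power_eq_0_iff zero_neq_numeral)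
  qed algebra
  then show ?thesis unfolding PVI_sol_y_def[abs_def] .
qed

lemma dT:
  assumes "u + 1 \<noteq> 0" "u - 1 \<noteq> 0"
  shows "(PVI_sol_t has_field_derivative TD u) (at u)"
proof -
  have f: "((\<lambda>u. 27 * u^2) has_field_derivative (54 * u)) (at u)"
    by (auto intro!: derivative_eq_intros; algebra)
  have g: "((\<lambda>u. 4 * (u^2 - 1)^3) has_field_derivative (24 * u * (u^2 - 1)^2)) (at u)"
    by (auto intro!: derivative_eq_intros; algebra)
  have e: "u^2 - 1 = (u + 1) * (u - 1)" by algebra
  have "((\<lambda>u. 27 * u^2 / (4 * (u^2 - 1)^3)) has_field_derivative TD u) (at u)"
    unfolding TD_def
  proof (rule quot_deriv[OF f g])
    show "4 * (u^2 - 1)^3 \<noteq> 0" unfolding e using assms by (metis mult_eq_0_iff power_eq_0_iff zero_neq_numeral)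
    show "2 * (u + 1) ^ 4 * (u - 1) ^ 4 \<noteq> 0" using assms by (metis mult_eq_0_iff power_eq_0_iff zero_neq_numeral)
  qed algebra
  then show ?thesis unfolding PVI_sol_t_def[abs_def] .
qed

lemma dAB:
  assumes "u \<noteq> 0" "2 * u^2 + 1 \<noteq> 0" "2 * u^2 + 6 * u + 1 \<noteq> 0" "u + 1 \<noteq> 0" "u - 1 \<noteq> 0"
  shows "(AB has_field_derivative G2 u * TD u) (at u)"
proof -
  have f: "((\<lambda>u. (u+1)^2 * (u-1) * A0 u) has_field_derivative
    (- 2 + 6 * u - 204 * u^2 - 376 * u^3 + 210 * u^4 + 546 * u^5 + 140 * u^6 + 72 * u^8 + 40 * u^9)) (at u)"
    unfolding A0_def by (auto intro!: derivative_eq_intros; algebra)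
  have g: "((\<lambda>u. 6 * u * (2*u^2+1) * (2*u^2+6*u+1)^2) has_field_derivative
    (6 + 144 * u + 756 * u^2 + 1152 * u^3 + 2520 * u^4 + 1728 * u^5 + 336 * u^6)) (at u)"
    by (auto intro!: derivative_eq_intros; algebra)
  have "((\<lambda>u. (u+1)^2 * (u-1) * A0 u / (6 * u * (2*u^2+1) * (2*u^2+6*u+1)^2)) has_field_derivative
     ((u+1)^5 * (u-1)^4 * C0 u * (- 27 * u - 54 * u^3)) / (81 * u^3 * (2*u^2+1)^3 * (2*u^2+6*u+1)^3 * (2 * (u+1)^4 * (u-1)^4))) (at u)"
  proof (rule quot_deriv[OF f g])
    show "6 * u * (2*u^2+1) * (2*u^2+6*u+1)^2 \<noteq> 0" using assms by (metis mult_eq_0_iff power_eq_0_iff zero_neq_numeral)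
    show "81 * u^3 * (2*u^2+1)^3 * (2*u^2+6*u+1)^3 * (2 * (u+1)^4 * (u-1)^4) \<noteq> 0"
      using assms by (metis mult_eq_0_iff power_eq_0_iff zero_neq_numeral)
  qed (unfold A0_def C0_def, algebra)
  moreover have "G2 u * TD u = ((u+1)^5 * (u-1)^4 * C0 u * (- 27 * u - 54 * u^3)) / (81 * u^3 * (2*u^2+1)^3 * (2*u^2+6*u+1)^3 * (2 * (u+1)^4 * (u-1)^4))"
    unfolding G2_def TD_def by simp
  ultimately show ?thesis unfolding AB_def[abs_def] by simp
qed

lemma chY1:
  fixes s p m q w n0 l n2 n3 :: complex
  assumes nz: "s \<noteq> 0" "p \<noteq> 0" "m \<noteq> 0" "q \<noteq> 0" 
  and d: "p = s + 1" "m = s - 1" "q = 2* s^2+6* s+1" "w = 2* s^2+1" "n0 = 18* s^3-27* s+36"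
     "l = 1 - 4* s" "n2 = s^2+s+1" "n3 = 4 - s^2"
  shows "(s * n0 / (4*p*m^2*q)) - 1 = (- (w*l*n3) / (4*p*m^2*q))"
  by (simp add: field_simps nz; unfold d; algebra)

lemma chYT:
  fixes s p m q w n0 l n2 n3 :: complex
  assumes nz: "s \<noteq> 0" "p \<noteq> 0" "m \<noteq> 0" "q \<noteq> 0" 
  and d: "p = s + 1" "m = s - 1" "q = 2* s^2+6* s+1" "w = 2* s^2+1" "n0 = 18* s^3-27* s+36"
     "l = 1 - 4* s" "n2 = s^2+s+1" "n3 = 4 - s^2"
  shows "(s * n0 / (4*p*m^2*q)) - (27* s^2/(4*p^3*m^3)) = (- (9* s*w*n2*n3) / (4*p^3*m^3*q))"
  by (simp add: field_simps nz; unfold d; algebra)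

lemma chT1:
  fixes s p m q w n0 l n2 n3 :: complex
  assumes nz: "s \<noteq> 0" "p \<noteq> 0" "m \<noteq> 0" "q \<noteq> 0" 
  and d: "p = s + 1" "m = s - 1" "q = 2* s^2+6* s+1" "w = 2* s^2+1" "n0 = 18* s^3-27* s+36"
     "l = 1 - 4* s" "n2 = s^2+s+1" "n3 = 4 - s^2"
  shows "(27* s^2/(4*p^3*m^3)) - 1 = (w^2*n3/(4*p^3*m^3))"
  by (simp add: field_simps nz; unfold d; algebra)

lemma chc1:
  fixes s p m q w n0 l n2 n3 :: complex
  assumes nz: "s \<noteq> 0" "p \<noteq> 0" "m \<noteq> 0" "q \<noteq> 0" "w \<noteq> 0" "n0 \<noteq> 0" "l \<noteq> 0" "n2 \<noteq> 0" "n3 \<noteq> 0"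
  and d: "p = s + 1" "m = s - 1" "q = 2* s^2+6* s+1" "w = 2* s^2+1" "n0 = 18* s^3-27* s+36"
     "l = 1 - 4* s" "n2 = s^2+s+1" "n3 = 4 - s^2"
  shows "1/(s * n0 / (4*p*m^2*q)) + 1/(- (w*l*n3) / (4*p*m^2*q)) + 1/(- (9* s*w*n2*n3) / (4*p^3*m^3*q)) = ((4 * p * m^2 * q * (8 - 63 * s - 25 * s^2 - 17 * s^3 - 13 * s^4 - 62 * s^5 - 6 * s^6 + 16 * s^7)) / (s * w * n0 * l * n2 * n3))"
  by (simp add: field_simps nz; unfold d; algebra)

lemma chc2:
  fixes s p m q w n0 l n2 n3 :: complex
  assumes nz: "s \<noteq> 0" "p \<noteq> 0" "m \<noteq> 0" "q \<noteq> 0" "w \<noteq> 0" "n0 \<noteq> 0" "l \<noteq> 0" "n2 \<noteq> 0" "n3 \<noteq> 0"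
  and d: "p = s + 1" "m = s - 1" "q = 2* s^2+6* s+1" "w = 2* s^2+1" "n0 = 18* s^3-27* s+36"
     "l = 1 - 4* s" "n2 = s^2+s+1" "n3 = 4 - s^2"
  shows "1/(27* s^2/(4*p^3*m^3)) + 1/(w^2*n3/(4*p^3*m^3)) + 1/(- (9* s*w*n2*n3) / (4*p^3*m^3*q)) = ((- 4 * p^3 * m^3 * (- 4 - s - 28 * s^2 - 30 * s^3 - 18 * s^4 - 8 * s^6 + 4 * s^7 + 4 * s^8)) / (27 * s^2 * w^2 * n2 * n3))"
  by (simp add: field_simps nz; unfold d; algebra)

lemma chc3:
  fixes s p m q w n0 l n2 n3 :: complex
  assumes nz: "s \<noteq> 0" "p \<noteq> 0" "m \<noteq> 0" "q \<noteq> 0" "w \<noteq> 0" "n0 \<noteq> 0" "l \<noteq> 0" "n2 \<noteq> 0" "n3 \<noteq> 0"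
  and d: "p = s + 1" "m = s - 1" "q = 2* s^2+6* s+1" "w = 2* s^2+1" "n0 = 18* s^3-27* s+36"
     "l = 1 - 4* s" "n2 = s^2+s+1" "n3 = 4 - s^2"
  shows "(s * n0 / (4*p*m^2*q))*(- (w*l*n3) / (4*p*m^2*q))*(- (9* s*w*n2*n3) / (4*p^3*m^3*q))/((27* s^2/(4*p^3*m^3))^2*(w^2*n3/(4*p^3*m^3))^2) = ((4 * p^7 * m^5 * n0 * l * n2) / (81 * s^2 * q^3 * w^2))"
  by (simp add: field_simps nz; unfold d; algebra)

lemma chc4:
  fixes s p m q w n0 l n2 n3 :: complex
  assumes nz: "s \<noteq> 0" "p \<noteq> 0" "m \<noteq> 0" "q \<noteq> 0" "w \<noteq> 0" "n0 \<noteq> 0" "l \<noteq> 0" "n2 \<noteq> 0" "n3 \<noteq> 0"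
  and d: "p = s + 1" "m = s - 1" "q = 2* s^2+6* s+1" "w = 2* s^2+1" "n0 = 18* s^3-27* s+36"
     "l = 1 - 4* s" "n2 = s^2+s+1" "n3 = 4 - s^2"
  shows "1/18 + (-1/8)*(27* s^2/(4*p^3*m^3))/(s * n0 / (4*p*m^2*q))^2 + (1/32)*(w^2*n3/(4*p^3*m^3))/(- (w*l*n3) / (4*p*m^2*q))^2 + (3/8)*(27* s^2/(4*p^3*m^3))*(w^2*n3/(4*p^3*m^3))/(- (9* s*w*n2*n3) / (4*p^3*m^3*q))^2 = ((- 9 * (- 304 + 2576 * s + 11548 * s^2 + 15356 * s^3 - 99887 * s^4 - 62509 * s^5 + 64751 * s^6 - 47769 * s^7 - 63084 * s^8 + 63736 * s^9 + 36352 * s^10 - 27256 * s^11 - 22880 * s^12 - 5968 * s^13 - 368 * s^14 + 112 * s^15)) / (8 * p * n0^2 * l^2 * n2^2 * n3))"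
  by (simp add: field_simps nz; unfold d; algebra)

lemma chtb:
  fixes s p m q w n0 l n2 n3 :: complex
  assumes nz: "s \<noteq> 0" "p \<noteq> 0" "m \<noteq> 0" "q \<noteq> 0" "w \<noteq> 0" "n0 \<noteq> 0" "l \<noteq> 0" "n2 \<noteq> 0" "n3 \<noteq> 0"
  and d: "p = s + 1" "m = s - 1" "q = 2* s^2+6* s+1" "w = 2* s^2+1" "n0 = 18* s^3-27* s+36"
     "l = 1 - 4* s" "n2 = s^2+s+1" "n3 = 4 - s^2"
  shows "(p^5 * m^4 * (- 4 - 68 * s - 23 * s^2 - 87 * s^3 + 185 * s^4 - s^5 - 2530 * s^6 - 1612 * s^7 - 724 * s^8 - 336 * s^9 - 104 * s^10 - 224 * s^11 - 256 * s^12 - 48 * s^13) / (81 * s^3 * w^3 * q^3)) = ((p^5 * m^4 * n0 * l * n2 * n3 * (- 4 - 68 * s - 23 * s^2 - 87 * s^3 + 185 * s^4 - s^5 - 2530 * s^6 - 1612 * s^7 - 724 * s^8 - 336 * s^9 - 104 * s^10 - 224 * s^11 - 256 * s^12 - 48 * s^13)) / (81)) / (s^3 * q^3 * w^3 * n0 * l * n2 * n3)"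
  by (simp add: field_simps nz; unfold d; algebra)

lemma cht1:
  fixes s p m q w n0 l n2 n3 :: complex
  assumes nz: "s \<noteq> 0" "p \<noteq> 0" "m \<noteq> 0" "q \<noteq> 0" "w \<noteq> 0" "n0 \<noteq> 0" "l \<noteq> 0" "n2 \<noteq> 0" "n3 \<noteq> 0"
  and d: "p = s + 1" "m = s - 1" "q = 2* s^2+6* s+1" "w = 2* s^2+1" "n0 = 18* s^3-27* s+36"
     "l = 1 - 4* s" "n2 = s^2+s+1" "n3 = 4 - s^2"
  shows "(1/2) * ((4 * p * m^2 * q * (8 - 63 * s - 25 * s^2 - 17 * s^3 - 13 * s^4 - 62 * s^5 - 6 * s^6 + 16 * s^7)) / (s * w * n0 * l * n2 * n3)) * (p^2 * m * (4 - 2 * s + 3 * s^2 + 67 * s^3 + 28 * s^4 + 4 * s^6 + 4 * s^7) / (6 * s * w * q^2))^2 = ((p^5 * m^4 * (128 - 1136 * s + 832 * s^2 + 2556 * s^3 - 33928 * s^4 - 9835 * s^5 + 11741 * s^6 - 280114 * s^7 - 385660 * s^8 - 223625 * s^9 - 183399 * s^10 - 415554 * s^11 - 309910 * s^12 - 23240 * s^13 + 4840 * s^14 - 42800 * s^15 - 10640 * s^16 + 9136 * s^17 + 1296 * s^18 - 928 * s^19 + 416 * s^20 + 256 * s^21)) / (18)) / (s^3 * q^3 * w^3 * n0 * l * n2 * n3)"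
  by (simp add: field_simps nz; unfold d; algebra)

lemma cht2:
  fixes s p m q w n0 l n2 n3 :: complex
  assumes nz: "s \<noteq> 0" "p \<noteq> 0" "m \<noteq> 0" "q \<noteq> 0" "w \<noteq> 0" "n0 \<noteq> 0" "l \<noteq> 0" "n2 \<noteq> 0" "n3 \<noteq> 0"
  and d: "p = s + 1" "m = s - 1" "q = 2* s^2+6* s+1" "w = 2* s^2+1" "n0 = 18* s^3-27* s+36"
     "l = 1 - 4* s" "n2 = s^2+s+1" "n3 = 4 - s^2"
  shows "((- 4 * p^3 * m^3 * (- 4 - s - 28 * s^2 - 30 * s^3 - 18 * s^4 - 8 * s^6 + 4 * s^7 + 4 * s^8)) / (27 * s^2 * w^2 * n2 * n3)) * (p^2 * m * (4 - 2 * s + 3 * s^2 + 67 * s^3 + 28 * s^4 + 4 * s^6 + 4 * s^7) / (6 * s * w * q^2)) = ((2 * p^5 * m^4 * q * n0 * l * (16 - 4 * s + 122 * s^2 + 335 * s^3 + 275 * s^4 + 1958 * s^5 + 2896 * s^6 + 2034 * s^7 + 636 * s^8 + 764 * s^9 + 136 * s^10 - 308 * s^11 - 80 * s^12 + 16 * s^13 - 32 * s^14 - 16 * s^15)) / (81)) / (s^3 * q^3 * w^3 * n0 * l * n2 * n3)"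
  by (simp add: field_simps nz; unfold d; algebra)

lemma cht3:
  fixes s p m q w n0 l n2 n3 :: complex
  assumes nz: "s \<noteq> 0" "p \<noteq> 0" "m \<noteq> 0" "q \<noteq> 0" "w \<noteq> 0" "n0 \<noteq> 0" "l \<noteq> 0" "n2 \<noteq> 0" "n3 \<noteq> 0"
  and d: "p = s + 1" "m = s - 1" "q = 2* s^2+6* s+1" "w = 2* s^2+1" "n0 = 18* s^3-27* s+36"
     "l = 1 - 4* s" "n2 = s^2+s+1" "n3 = 4 - s^2"
  shows "((4 * p^7 * m^5 * n0 * l * n2) / (81 * s^2 * q^3 * w^2)) * ((- 9 * (- 304 + 2576 * s + 11548 * s^2 + 15356 * s^3 - 99887 * s^4 - 62509 * s^5 + 64751 * s^6 - 47769 * s^7 - 63084 * s^8 + 63736 * s^9 + 36352 * s^10 - 27256 * s^11 - 22880 * s^12 - 5968 * s^13 - 368 * s^14 + 112 * s^15)) / (8 * p * n0^2 * l^2 * n2^2 * n3)) = ((s * p^6 * m^5 * w * (304 - 2576 * s - 11548 * s^2 - 15356 * s^3 + 99887 * s^4 + 62509 * s^5 - 64751 * s^6 + 47769 * s^7 + 63084 * s^8 - 63736 * s^9 - 36352 * s^10 + 27256 * s^11 + 22880 * s^12 + 5968 * s^13 + 368 * s^14 - 112 * s^15)) / (18)) / (s^3 * q^3 * w^3 * n0 * l * n2 * n3)"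
  by (simp add: field_simps nz; unfold d; algebra)

lemma chsum:
  fixes s p m q w n0 l n2 n3 :: complex
  assumes nz: "s \<noteq> 0" "p \<noteq> 0" "m \<noteq> 0" "q \<noteq> 0" "w \<noteq> 0" "n0 \<noteq> 0" "l \<noteq> 0" "n2 \<noteq> 0" "n3 \<noteq> 0"
  and d: "p = s + 1" "m = s - 1" "q = 2* s^2+6* s+1" "w = 2* s^2+1" "n0 = 18* s^3-27* s+36"
     "l = 1 - 4* s" "n2 = s^2+s+1" "n3 = 4 - s^2"
  shows "((p^5 * m^4 * n0 * l * n2 * n3 * (- 4 - 68 * s - 23 * s^2 - 87 * s^3 + 185 * s^4 - s^5 - 2530 * s^6 - 1612 * s^7 - 724 * s^8 - 336 * s^9 - 104 * s^10 - 224 * s^11 - 256 * s^12 - 48 * s^13)) / (81)) / (s^3 * q^3 * w^3 * n0 * l * n2 * n3) - (((p^5 * m^4 * (128 - 1136 * s + 832 * s^2 + 2556 * s^3 - 33928 * s^4 - 9835 * s^5 + 11741 * s^6 - 280114 * s^7 - 385660 * s^8 - 223625 * s^9 - 183399 * s^10 - 415554 * s^11 - 309910 * s^12 - 23240 * s^13 + 4840 * s^14 - 42800 * s^15 - 10640 * s^16 + 9136 * s^17 + 1296 * s^18 - 928 * s^19 + 416 * s^20 + 256 * s^21)) / (18)) / (s^3 * q^3 * w^3 * n0 * l * n2 * n3) - ((2 * p^5 * m^4 * q * n0 * l * (16 - 4 * s + 122 * s^2 + 335 * s^3 + 275 * s^4 + 1958 * s^5 + 2896 * s^6 + 2034 *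 s^7 + 636 * s^8 + 764 * s^9 + 136 * s^10 - 308 * s^11 - 80 * s^12 + 16 * s^13 - 32 * s^14 - 16 * s^15)) / (81)) / (s^3 * q^3 * w^3 * n0 * l * n2 * n3) + ((s * p^6 * m^5 * w * (304 - 2576 * s - 11548 * s^2 - 15356 * s^3 + 99887 * s^4 + 62509 * s^5 - 64751 * s^6 + 47769 * s^7 + 63084 * s^8 - 63736 * s^9 - 36352 * s^10 + 27256 * s^11 + 22880 * s^12 + 5968 * s^13 + 368 * s^14 - 112 * s^15)) / (18)) / (s^3 * q^3 * w^3 * n0 * l * n2 * n3)) = 0"
proof -
  have br: "n0 * l * n2 * n3 * (- 4 - 68 * s - 23 * s^2 - 87 * s^3 + 185 * s^4 - s^5 - 2530 * s^6 - 1612 * s^7 - 724 * s^8 - 336 * s^9 - 104 * s^10 - 224 * s^11 - 256 * s^12 - 48 * s^13) / 81 - (128 - 1136 * s + 832 * s^2 + 2556 * s^3 - 33928 * s^4 - 9835 * s^5 + 11741 * s^6 - 280114 * s^7 - 385660 * s^8 - 223625 * s^9 - 183399 * s^10 - 415554 * s^11 - 309910 * s^12 - 23240 * s^13 + 4840 * s^14 - 42800 * s^15 - 10640 * s^16 + 9136 * s^17 + 1296 * s^18 - 928 * s^19 + 416 * s^20 + 256 * s^21) / 18 + 2 * q * n0 * l * (16 - 4 * s + 122 * s^2 + 335 * s^3 + 275 * s^4 + 1958 * s^5 + 2896 * s^6 + 2034 * s^7 + 636 * s^8 + 764 * s^9 + 136 * s^10 - 308 * s^11 - 80 * s^12 +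 16 * s^13 - 32 * s^14 - 16 * s^15) / 81 - s * p * m * w * (304 - 2576 * s - 11548 * s^2 - 15356 * s^3 + 99887 * s^4 + 62509 * s^5 - 64751 * s^6 + 47769 * s^7 + 63084 * s^8 - 63736 * s^9 - 36352 * s^10 + 27256 * s^11 + 22880 * s^12 + 5968 * s^13 + 368 * s^14 - 112 * s^15) / 18 = 0" unfolding d by algebra
  have "((p^5 * m^4 * n0 * l * n2 * n3 * (- 4 - 68 * s - 23 * s^2 - 87 * s^3 + 185 * s^4 - s^5 - 2530 * s^6 - 1612 * s^7 - 724 * s^8 - 336 * s^9 - 104 * s^10 - 224 * s^11 - 256 * s^12 - 48 * s^13)) / (81)) - ((p^5 * m^4 * (128 - 1136 * s + 832 * s^2 + 2556 * s^3 - 33928 * s^4 - 9835 * s^5 + 11741 * s^6 - 280114 * s^7 - 385660 * s^8 - 223625 * s^9 - 183399 * s^10 - 415554 * s^11 - 309910 * s^12 - 23240 * s^13 + 4840 * s^14 - 42800 * s^15 - 10640 * s^16 + 9136 * s^17 + 1296 * s^18 - 928 * s^19 + 416 * s^20 + 256 * s^21)) / (18)) + ((2 * p^5 * m^4 * q * n0 * l * (16 - 4 * s + 122 * s^2 + 335 * s^3 + 275 * s^4 + 1958 * s^5 + 2896 * s^6 + 2034 * s^7 + 636 * s^8 + 764 * s^9 + 136 * s^10 - 308 * s^11 - 80 * s^12 + 16 * s^13 - 32 * s^14 - 16 * s^15)) / (81)) - ((s * p^6 * m^5 * w * (304 - 2576 * s - 11548 * s^2 - 15356 * s^3 + 99887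 * s^4 + 62509 * s^5 - 64751 * s^6 + 47769 * s^7 + 63084 * s^8 - 63736 * s^9 - 36352 * s^10 + 27256 * s^11 + 22880 * s^12 + 5968 * s^13 + 368 * s^14 - 112 * s^15)) / (18)) = p^5 * m^4 * (n0 * l * n2 * n3 * (- 4 - 68 * s - 23 * s^2 - 87 * s^3 + 185 * s^4 - s^5 - 2530 * s^6 - 1612 * s^7 - 724 * s^8 - 336 * s^9 - 104 * s^10 - 224 * s^11 - 256 * s^12 - 48 * s^13) / 81 - (128 - 1136 * s + 832 * s^2 + 2556 * s^3 - 33928 * s^4 - 9835 * s^5 + 11741 * s^6 - 280114 * s^7 - 385660 * s^8 - 223625 * s^9 - 183399 * s^10 - 415554 * s^11 - 309910 * s^12 - 23240 * s^13 + 4840 * s^14 - 42800 * s^15 - 10640 * s^16 + 9136 * s^17 + 1296 * s^18 - 928 * s^19 + 416 * s^20 + 256 * s^21) / 18 + 2 * q * n0 * l * (16 - 4 * s + 122 * s^2 + 335 * s^3 + 275 * s^4 + 1958 * s^5 + 2896 * s^6 + 2034 * s^7 + 636 * s^8 + 764 * s^9 + 136 * s^10 - 308 * s^11 - 80 * s^12 + 16 * s^13 - 32 * s^14 - 16 * s^15) / 81 - s * p * m * w * (304 - 2576 * s - 11548 * s^2 - 15356 * s^3 + 99887 * s^4 + 62509 * s^5 - 64751 * s^6 + 47769 * s^7 + 63084 * s^8 - 63736 * s^9 - 36352 * s^10 + 27256 * s^11 + 22880 * s^12 + 5968 * s^13 + 368 * s^14 - 112 * s^15) / 18)" by algebra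
  then have z: "((p^5 * m^4 * n0 * l * n2 * n3 * (- 4 - 68 * s - 23 * s^2 - 87 * s^3 + 185 * s^4 - s^5 - 2530 * s^6 - 1612 * s^7 - 724 * s^8 - 336 * s^9 - 104 * s^10 - 224 * s^11 - 256 * s^12 - 48 * s^13)) / (81)) - ((p^5 * m^4 * (128 - 1136 * s + 832 * s^2 + 2556 * s^3 - 33928 * s^4 - 9835 * s^5 + 11741 * s^6 - 280114 * s^7 - 385660 * s^8 - 223625 * s^9 - 183399 * s^10 - 415554 * s^11 - 309910 * s^12 - 23240 * s^13 + 4840 * s^14 - 42800 * s^15 - 10640 * s^16 + 9136 * s^17 + 1296 * s^18 - 928 * s^19 + 416 * s^20 + 256 * s^21)) / (18)) + ((2 * p^5 * m^4 * q * n0 * l * (16 - 4 * s + 122 * s^2 + 335 * s^3 + 275 * s^4 + 1958 * s^5 + 2896 * s^6 + 2034 * s^7 + 636 * s^8 + 764 * s^9 + 136 * s^10 - 308 * s^11 - 80 * s^12 + 16 * s^13 - 32 * s^14 - 16 * s^15)) / (81)) - ((s * p^6 * m^5 * w * (304 - 2576 * s - 11548 * s^2 - 15356 * s^3 + 99887 * s^4 + 62509 * s^5 - 64751 * s^6 + 47769 * s^7 + 63084 * s^8 - 63736 * s^9 - 36352 * s^10 + 27256 * s^11 + 22880 * s^12 + 5968 * s^13 + 368 * s^14 - 112 * s^15)) / (18)) = 0" using br by simp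
  have g: "\<And>x y z v L :: complex. x/L - (y/L - z/L + v/L) = (x - y + z - v)/L"
    by (simp add: diff_divide_distrib add_divide_distrib)
  show ?thesis unfolding g z by simp
qed

lemma final:
  fixes s Y T a b :: complex
  assumes nz0: "s \<noteq> 0" "s + 1 \<noteq> 0" "s - 1 \<noteq> 0" "2* s^2+6* s+1 \<noteq> 0" "2* s^2+1 \<noteq> 0"
    "18* s^3-27* s+36 \<noteq> 0" "1 - 4* s \<noteq> 0" "s^2+s+1 \<noteq> 0" "4 - s^2 \<noteq> 0"
  and hY0: "Y = s * (18* s^3-27* s+36) / (4*(s + 1)*(s - 1)^2*(2* s^2+6* s+1))"
  and hT0: "T = 27* s^2/(4*(s + 1)^3*(s - 1)^3)"
  and ha0: "a = (s + 1)^2 * (s - 1) * (4 - 2 * s + 3 * s^2 + 67 * s^3 + 28 * s^4 + 4 * s^6 + 4 * s^7) / (6 * s * (2* s^2+1) * (2* s^2+6* s+1)^2)"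
  and hb0: "b = (s + 1)^5 * (s - 1)^4 * (- 4 - 68 * s - 23 * s^2 - 87 * s^3 + 185 * s^4 - s^5 - 2530 * s^6 - 1612 * s^7 - 724 * s^8 - 336 * s^9 - 104 * s^10 - 224 * s^11 - 256 * s^12 - 48 * s^13) / (81 * s^3 * (2* s^2+1)^3 * (2* s^2+6* s+1)^3)"
  shows "PVI_residual (1/2) (1/2) (1/4) (2/3) T Y a b = 0"
proof -
  define p where "p = s + 1"
  define m where "m = s - 1"
  define q where "q = 2* s^2+6* s+1"
  define w where "w = 2* s^2+1"
  define n0 where "n0 = 18* s^3-27* s+36"
  define l where "l = 1 - 4* s"
  define n2 where "n2 = s^2+s+1"
  define n3 where "n3 = 4 - s^2"
  note d = p_def m_def q_def w_def n0_def l_def n2_def n3_def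
  have nz: "s \<noteq> 0" "p \<noteq> 0" "m \<noteq> 0" "q \<noteq> 0" "w \<noteq> 0" "n0 \<noteq> 0" "l \<noteq> 0" "n2 \<noteq> 0" "n3 \<noteq> 0"
    unfolding d using nz0 by simp_all
  have hY: "Y = (s * n0 / (4*p*m^2*q))" unfolding d by (rule hY0)
  have hT: "T = (27* s^2/(4*p^3*m^3))" unfolding d by (rule hT0)
  have ha: "a = (p^2 * m * (4 - 2 * s + 3 * s^2 + 67 * s^3 + 28 * s^4 + 4 * s^6 + 4 * s^7) / (6 * s * w * q^2))" unfolding d by (rule ha0)
  have hb: "b = (p^5 * m^4 * (- 4 - 68 * s - 23 * s^2 - 87 * s^3 + 185 * s^4 - s^5 - 2530 * s^6 - 1612 * s^7 - 724 * s^8 - 336 * s^9 - 104 * s^10 - 224 * s^11 - 256 * s^12 - 48 * s^13) / (81 * s^3 * w^3 * q^3))" unfolding d by (rule hb0)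
  have e1: "Y - 1 = (- (w*l*n3) / (4*p*m^2*q))" unfolding hY by (rule chY1[OF nz(1-4) d])
  have e2: "Y - T = (- (9* s*w*n2*n3) / (4*p^3*m^3*q))" unfolding hY hT by (rule chYT[OF nz(1-4) d])
  have e3: "T - 1 = (w^2*n3/(4*p^3*m^3))" unfolding hT by (rule chT1[OF nz(1-4) d])
  have e: "PVI_residual (1/2) (1/2) (1/4) (2/3) T Y a b = b - ((1/2) * (1/Y + 1/(Y-1) + 1/(Y-T)) * a^2
      - (1/T + 1/(T-1) + 1/(Y-T)) * a + Y*(Y-1)*(Y-T)/(T^2*(T-1)^2) *
      (1/18 + (-1/8)*T/Y^2 + (1/32)*(T-1)/(Y-1)^2 + (3/8)*T*(T-1)/(Y-T)^2))"
    unfolding PVI_residual_def Let_def by (simp add: power2_eq_square)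
  have c1: "1/Y + 1/(Y-1) + 1/(Y-T) = ((4 * p * m^2 * q * (8 - 63 * s - 25 * s^2 - 17 * s^3 - 13 * s^4 - 62 * s^5 - 6 * s^6 + 16 * s^7)) / (s * w * n0 * l * n2 * n3))"
    unfolding e1 e2 unfolding hY hT by (rule chc1[OF nz d])
  have c2: "1/T + 1/(T-1) + 1/(Y-T) = ((- 4 * p^3 * m^3 * (- 4 - s - 28 * s^2 - 30 * s^3 - 18 * s^4 - 8 * s^6 + 4 * s^7 + 4 * s^8)) / (27 * s^2 * w^2 * n2 * n3))"
    unfolding e3 e2 unfolding hY hT by (rule chc2[OF nz d])
  have c3: "Y*(Y-1)*(Y-T)/(T^2*(T-1)^2) = ((4 * p^7 * m^5 * n0 * l * n2) / (81 * s^2 * q^3 * w^2))"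
    unfolding e1 e2 e3 unfolding hY hT by (rule chc3[OF nz d])
  have c4: "1/18 + (-1/8)*T/Y^2 + (1/32)*(T-1)/(Y-1)^2 + (3/8)*T*(T-1)/(Y-T)^2 = ((- 9 * (- 304 + 2576 * s + 11548 * s^2 + 15356 * s^3 - 99887 * s^4 - 62509 * s^5 + 64751 * s^6 - 47769 * s^7 - 63084 * s^8 + 63736 * s^9 + 36352 * s^10 - 27256 * s^11 - 22880 * s^12 - 5968 * s^13 - 368 * s^14 + 112 * s^15)) / (8 * p * n0^2 * l^2 * n2^2 * n3))"
    unfolding e1 e2 e3 unfolding hY hT by (rule chc4[OF nz d])
  show ?thesis
    unfolding e c1 c2 c3 c4 unfolding ha hb
    unfolding cht1[OF nz d] cht2[OF nz d] cht3[OF nz d] chtb[OF nz d]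
    by (rule chsum[OF nz d])
qed

lemma ratio:
  assumes "u \<noteq> 0" "2 * u^2 + 1 \<noteq> 0" "2 * u^2 + 6 * u + 1 \<noteq> 0" "u + 1 \<noteq> 0" "u - 1 \<noteq> 0"
  shows "YD u / TD u = AB u"
proof -
  have k: "- 27 * u - 54 * u^3 = - 27 * u * (2 * u^2 + 1)" by algebra
  have kz: "- 27 * u - 54 * u^3 \<noteq> 0" unfolding k using assms by simp
  have h1: "4 * (u+1)^2 * (u-1)^3 * (2*u^2+6*u+1)^2 \<noteq> 0" using assms
    by (metis mult_eq_0_iff power_eq_0_iff zero_neq_numeral)
  have h2: "2 * (u+1)^4 * (u-1)^4 \<noteq> 0" using assms
    by (metis mult_eq_0_iff power_eq_0_iff zero_neq_numeral)
  have h3: "6 * u * (2*u^2+1) * (2*u^2+6*u+1)^2 \<noteq> 0" using assms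
    by (metis mult_eq_0_iff power_eq_0_iff zero_neq_numeral)
  have "YD u / TD u = ((- 36 + 18 * u - 27 * u^2 - 603 * u^3 - 252 * u^4 - 36 * u^6 - 36 * u^7)
     * (2 * (u+1)^4 * (u-1)^4)) / ((4 * (u+1)^2 * (u-1)^3 * (2*u^2+6*u+1)^2) * (- 27 * u - 54 * u^3))"
    unfolding YD_def TD_def by (rule divide_divide_times_eq)
  also have "\<dots> = AB u"
    unfolding AB_def A0_def
    by (subst frac_eq_eq) (use h1 h2 h3 kz in simp_all, algebra)
  finally show ?thesis .
qed

theorem mainTheorem6:
  fixes s :: complex
  assumes "s + 1 \<noteq> 0" and "s - 1 \<noteq> 0" and "2 * s^2 + 6 * s + 1 \<noteq> 0"
    and "deriv PVI_sol_t s \<noteq> 0"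
    and "PVI_sol_t s \<noteq> 0" and "PVI_sol_t s \<noteq> 1"
    and "PVI_sol_y s \<noteq> 0" and "PVI_sol_y s \<noteq> 1" and "PVI_sol_y s \<noteq> PVI_sol_t s"
  shows "PVI_residual (1/2) (1/2) (1/4) (2/3) (PVI_sol_t s) (PVI_sol_y s)
           (deriv PVI_sol_y s / deriv PVI_sol_t s)
           (deriv (\<lambda>u. deriv PVI_sol_y u / deriv PVI_sol_t u) s / deriv PVI_sol_t s) = 0"
proof -
  have s0: "s \<noteq> 0" using assms(5) unfolding PVI_sol_t_def by auto
  have dTs: "deriv PVI_sol_t s = TD s" using dT[OF assms(1,2)] by (rule DERIV_imp_deriv)
  have dYs: "deriv PVI_sol_y s = YD s" using dY[OF assms(1,2,3)] by (rule DERIV_imp_deriv)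
  have w0: "2* s^2+1 \<noteq> 0"
  proof
    assume h: "2* s^2+1 = 0"
    have "- 27 * s - 54 * s^3 = - 27 * s * (2 * s^2 + 1)" by algebra
    then have "- 27 * s - 54 * s^3 = 0" using h by simp
    then have "TD s = 0" unfolding TD_def by simp
    then show False using assms(4) dTs by simp
  qed
  define U where "U = {u::complex. u + 1 \<noteq> 0 \<and> u - 1 \<noteq> 0 \<and> 2*u^2+6*u+1 \<noteq> 0 \<and> u \<noteq> 0 \<and> 2*u^2+1 \<noteq> 0}"
  have oU: "open U" unfolding U_def
    by (intro open_Collect_conj open_Collect_neq continuous_intros)
  have sU: "s \<in> U" unfolding U_def using assms(1,2,3) s0 w0 by simp
  have onU: "deriv PVI_sol_y u / deriv PVI_sol_t u = AB u" if "u \<in> U" for u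
  proof -
    have u: "u + 1 \<noteq> 0" "u - 1 \<noteq> 0" "2*u^2+6*u+1 \<noteq> 0" "u \<noteq> 0" "2*u^2+1 \<noteq> 0"
      using that unfolding U_def by auto
    have "deriv PVI_sol_y u = YD u" using dY[OF u(1,2,3)] by (rule DERIV_imp_deriv)
    moreover have "deriv PVI_sol_t u = TD u" using dT[OF u(1,2)] by (rule DERIV_imp_deriv)
    ultimately show ?thesis using ratio[OF u(4,5,3,1,2)] by simp
  qed
  have ev: "eventually (\<lambda>u. deriv PVI_sol_y u / deriv PVI_sol_t u = AB u) (nhds s)"
    unfolding eventually_nhds using oU sU onU by blast
  have d2: "deriv (\<lambda>u. deriv PVI_sol_y u / deriv PVI_sol_t u) s = G2 s * TD s"
    using deriv_cong_ev[OF ev refl] DERIV_imp_deriv[OF dAB[OF s0 w0 assms(3,1,2)]] by simp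
  have TDz: "TD s \<noteq> 0" using assms(4) dTs by simp
  have y1: "deriv PVI_sol_y s / deriv PVI_sol_t s = AB s" using onU[OF sU] .
  have y2: "deriv (\<lambda>u. deriv PVI_sol_y u / deriv PVI_sol_t u) s / deriv PVI_sol_t s = G2 s"
    unfolding d2 dTs using TDz by simp
  have hY0: "PVI_sol_y s = s * (18* s^3-27* s+36) / (4*(s + 1)*(s - 1)^2*(2* s^2+6* s+1))"
  proof -
    have "9 * s * (2 * s^3 - 3 * s + 4) = s * (18* s^3-27* s+36)" by algebra
    then show ?thesis unfolding PVI_sol_y_def by simp
  qed
  have hT0: "PVI_sol_t s = 27* s^2/(4*(s + 1)^3*(s - 1)^3)"
  proof -
    have "(s^2 - 1)^3 = (s + 1)^3*(s - 1)^3" by algebra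
    then show ?thesis unfolding PVI_sol_t_def by (simp add: mult.assoc)
  qed
  have eY1: "PVI_sol_y s - 1 = - ((2* s^2+1) * (1 - 4* s) * (4 - s^2)) / (4*(s + 1)*(s - 1)^2*(2* s^2+6* s+1))"
    unfolding hY0 by (rule chY1[OF s0 assms(1,2,3) refl refl refl refl refl refl refl refl])
  have eYT: "PVI_sol_y s - PVI_sol_t s = - (9* s*(2* s^2+1)*(s^2+s+1)*(4 - s^2)) / (4*(s + 1)^3*(s - 1)^3*(2* s^2+6* s+1))"
    unfolding hY0 hT0 by (rule chYT[OF s0 assms(1,2,3) refl refl refl refl refl refl refl refl])
  have n0: "18* s^3-27* s+36 \<noteq> 0" using assms(7) unfolding hY0 by auto
  have ln3: "1 - 4* s \<noteq> 0" "4 - s^2 \<noteq> 0" using assms(8) eY1 by auto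
  have n2: "s^2+s+1 \<noteq> 0" using assms(9) eYT by auto
  have ha0: "AB s = (s + 1)^2 * (s - 1) * (4 - 2 * s + 3 * s^2 + 67 * s^3 + 28 * s^4 + 4 * s^6 + 4 * s^7) / (6 * s * (2* s^2+1) * (2* s^2+6* s+1)^2)"
    unfolding AB_def A0_def ..
  have hb0: "G2 s = (s + 1)^5 * (s - 1)^4 * (- 4 - 68 * s - 23 * s^2 - 87 * s^3 + 185 * s^4 - s^5 - 2530 * s^6 - 1612 * s^7 - 724 * s^8 - 336 * s^9 - 104 * s^10 - 224 * s^11 - 256 * s^12 - 48 * s^13) / (81 * s^3 * (2* s^2+1)^3 * (2* s^2+6* s+1)^3)"
    unfolding G2_def C0_def ..
  show ?thesis unfolding y1 y2
    by (rule final[OF s0 assms(1,2,3) w0 n0 ln3(1) n2 ln3(2) hY0 hT0 ha0 hb0])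
qed

end
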